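(* Let $X$ be a two-sided quaternionic Banach space and $T\in\mathcal{B}(X)$. Then for every $s\in\rho_S(T)$, $$\mathcal{Y}_L(s,T)=T\,S_L^{-1}(s,T)\,s,$$ where $\mathcal{Y}_L(s,T)=S_L^{-1}(s,T)s^2-s\mathcal{I}$ is the left spherical Yosida approximation of $T$.
   Context: $\mathbb{H}$ denotes the real algebra of quaternions; for $s\in\mathbb{H}$, $\overline{s}$ is its conjugate, $\mathrm{Re}(s)$ its real part and $|s|$ its modulus. $X$ is a two-sided vector space over $\mathbb{H}$ which is a Banach space; $\mathcal{B}(X)$ is the algebra of bounded right $\mathbb{H}$-linear operators on $X$ (i.e. $T(uq+v)=(Tu)q+Tv$ for $u,v\in X$, $q\in\mathbb{H}$), with identity $\mathcal{I}$ and operator norm. For operators and quaternions, $(sT)(v)=s(Tv)$ and $(Ts)(v)=T(sv)$. For $s\in\mathbb{H}$ put $Q_s(T)=T^2-2\mathrm{Re}(s)T+|s|^2\mathcal{I}$. The $S$-resolvent set is $\rho_S(T)=\{s\in\mathbb{H}: Q_s(T)\text{ is invertible in }\mathcal{B}(X)\}$, and the $S$-spectrum is $\sigma_S(T)=\mathbb{H}\setminus\rho_S(T)$. For $s\in\rho_S(T)$ the left $S$-resolvent operator is $S_L^{-1}(s,T)=Q_s(T)^{-1}(\overline{s}\mathcal{I}-T)$. *)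

theory Defs
  imports Complex_Main
begin

datatype quat = Quat (qre: real) (qi: real) (qj: real) (qk: real)

definition qof_real :: "real \<Rightarrow> quat" where
  "qof_real r = Quat r 0 0 0"

definition qone :: quat where
  "qone = Quat 1 0 0 0"

definition qadd :: "quat \<Rightarrow> quat \<Rightarrow> quat" where
  "qadd p q = Quat (qre p + qre q) (qi p + qi q) (qj p + qj q) (qk p + qk q)"

definition qmul :: "quat \<Rightarrow> quat \<Rightarrow> quat" where
  "qmul p q = Quat
     (qre p * qre q - qi p * qi q - qj p * qj q - qk p * qk q)
     (qre p * qi q + qi p * qre q + qj p * qk q - qk p * qj q)
     (qre p * qj q - qi p * qk q + qj p * qre q + qk p * qi q)
     (qre p * qk q + qi p * qj q - qj p * qi q + qk p * qre q)"

definition qcnj :: "quat \<Rightarrow> quat" where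
  "qcnj q = Quat (qre q) (- qi q) (- qj q) (- qk q)"

definition qnorm :: "quat \<Rightarrow> real" where
  "qnorm q = sqrt ((qre q)\<^sup>2 + (qi q)\<^sup>2 + (qj q)\<^sup>2 + (qk q)\<^sup>2)"

text \<open>The space X is a real Banach space (type class banach) equipped with a left
  action Lm (Lm q v = q v) and a right action Rm (Rm q v = v q) of the quaternions,
  making it a two-sided quaternionic vector space whose real scalar multiplications
  agree with the real vector structure, and whose norm satisfies
  norm (q v) = norm (v q) = |q| norm v.\<close>

definition two_sided_qbanach :: "(quat \<Rightarrow> 'v::banach \<Rightarrow> 'v) \<Rightarrow> (quat \<Rightarrow> 'v \<Rightarrow> 'v) \<Rightarrow> bool" where
  "two_sided_qbanach Lm Rm \<longleftrightarrow>
     (\<forall>p q v. Lm (qmul p q) v = Lm p (Lm q v)) \<and>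
     (\<forall>p q v. Rm (qmul p q) v = Rm q (Rm p v)) \<and>
     (\<forall>v. Lm qone v = v) \<and> (\<forall>v. Rm qone v = v) \<and>
     (\<forall>p q v. Lm (qadd p q) v = Lm p v + Lm q v) \<and>
     (\<forall>p q v. Rm (qadd p q) v = Rm p v + Rm q v) \<and>
     (\<forall>q u v. Lm q (u + v) = Lm q u + Lm q v) \<and>
     (\<forall>q u v. Rm q (u + v) = Rm q u + Rm q v) \<and>
     (\<forall>p q v. Lm p (Rm q v) = Rm q (Lm p v)) \<and>
     (\<forall>r v. Lm (qof_real r) v = r *\<^sub>R v) \<and>
     (\<forall>r v. Rm (qof_real r) v = r *\<^sub>R v) \<and>
     (\<forall>q v. norm (Lm q v) = qnorm q * norm v) \<and>
     (\<forall>q v. norm (Rm q v) = qnorm q * norm v)"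

definition qbounded_op :: "(quat \<Rightarrow> 'v::banach \<Rightarrow> 'v) \<Rightarrow> ('v \<Rightarrow> 'v) \<Rightarrow> bool" where
  "qbounded_op Rm T \<longleftrightarrow>
     (\<forall>u v q. T (Rm q u + v) = Rm q (T u) + T v) \<and>
     (\<exists>K. \<forall>v. norm (T v) \<le> K * norm v)"

definition qinvertible :: "(quat \<Rightarrow> 'v::banach \<Rightarrow> 'v) \<Rightarrow> ('v \<Rightarrow> 'v) \<Rightarrow> bool" where
  "qinvertible Rm A \<longleftrightarrow>
     (\<exists>B. qbounded_op Rm B \<and> (\<forall>v. B (A v) = v) \<and> (\<forall>v. A (B v) = v))"

definition qinverse :: "(quat \<Rightarrow> 'v::banach \<Rightarrow> 'v) \<Rightarrow> ('v \<Rightarrow> 'v) \<Rightarrow> ('v \<Rightarrow> 'v)" where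
  "qinverse Rm A = (THE B. qbounded_op Rm B \<and> (\<forall>v. B (A v) = v) \<and> (\<forall>v. A (B v) = v))"

definition Qs :: "quat \<Rightarrow> ('v::banach \<Rightarrow> 'v) \<Rightarrow> ('v \<Rightarrow> 'v)" where
  "Qs s T = (\<lambda>v. T (T v) - (2 * qre s) *\<^sub>R T v + (qnorm s)\<^sup>2 *\<^sub>R v)"

definition S_resolvent_set :: "(quat \<Rightarrow> 'v::banach \<Rightarrow> 'v) \<Rightarrow> ('v \<Rightarrow> 'v) \<Rightarrow> quat set" where
  "S_resolvent_set Rm T = {s. qinvertible Rm (Qs s T)}"

definition S_spectrum :: "(quat \<Rightarrow> 'v::banach \<Rightarrow> 'v) \<Rightarrow> ('v \<Rightarrow> 'v) \<Rightarrow> quat set" where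
  "S_spectrum Rm T = UNIV - S_resolvent_set Rm T"

definition SL_resolvent ::
  "(quat \<Rightarrow> 'v::banach \<Rightarrow> 'v) \<Rightarrow> (quat \<Rightarrow> 'v \<Rightarrow> 'v) \<Rightarrow> quat \<Rightarrow> ('v \<Rightarrow> 'v) \<Rightarrow> ('v \<Rightarrow> 'v)" where
  "SL_resolvent Lm Rm s T = (\<lambda>v. qinverse Rm (Qs s T) (Lm (qcnj s) v - T v))"

text \<open>Left spherical Yosida approximation Y_L(s,T) = S_L^{-1}(s,T) s^2 - s I,
  where (A s)(v) = A (s v) and (s I)(v) = s v.\<close>

definition Yosida_L ::
  "(quat \<Rightarrow> 'v::banach \<Rightarrow> 'v) \<Rightarrow> (quat \<Rightarrow> 'v \<Rightarrow> 'v) \<Rightarrow> quat \<Rightarrow> ('v \<Rightarrow> 'v) \<Rightarrow> ('v \<Rightarrow> 'v)" where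
  "Yosida_L Lm Rm s T = (\<lambda>v. SL_resolvent Lm Rm s T (Lm (qmul s s) v) - Lm s v)"

end

theory Submission
  imports Defs
begin

lemma qcnj_mul: "qmul (qcnj s) s = qof_real ((qnorm s)\<^sup>2)"
  by (cases s) (simp add: qmul_def qcnj_def qof_real_def qnorm_def power2_eq_square algebra_simps)

lemma qcnj_add: "qadd (qcnj s) s = qof_real (2 * qre s)"
  by (cases s) (simp add: qadd_def qcnj_def qof_real_def)

lemma add_hom_diff:
  assumes "\<And>u v::'b::ab_group_add. f (u + v) = f u + (f v :: 'a::ab_group_add)"
  shows "f (u - v) = f u - f v"
proof -
  have "f (u - v + v) = f (u - v) + f v" by (rule assms)
  hence "f (u - v) + f v = f u" by simp
  thus ?thesis by (simp add: eq_diff_eq)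
qed

theorem lemma3p5:
  fixes Lm Rm :: "quat \<Rightarrow> 'v::banach \<Rightarrow> 'v" and T :: "'v \<Rightarrow> 'v" and s :: quat
  assumes "two_sided_qbanach Lm Rm"
    and "qbounded_op Rm T"
    and "s \<in> S_resolvent_set Rm T"
  shows "Yosida_L Lm Rm s T = (\<lambda>v. T (SL_resolvent Lm Rm s T (Lm s v)))"
proof -
  have A: "two_sided_qbanach Lm Rm" by fact
  have Rone: "\<And>v. Rm qone v = v" and Rreal: "\<And>r v. Rm (qof_real r) v = r *\<^sub>R v"
    and Lmul: "\<And>p q v. Lm (qmul p q) v = Lm p (Lm q v)"
    and Ladd: "\<And>p q v. Lm (qadd p q) v = Lm p v + Lm q v"
    and Lreal: "\<And>r v. Lm (qof_real r) v = r *\<^sub>R v"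
    using A unfolding two_sided_qbanach_def by simp_all
  have Tl: "\<And>u v q. T (Rm q u + v) = Rm q (T u) + T v" using assms(2) unfolding qbounded_op_def by blast
  have Tadd: "\<And>u v. T (u + v) = T u + T v" using Tl[of qone] Rone by simp
  have T0: "T 0 = 0" using Tadd[of 0 0] by simp
  have Tsc: "T (r *\<^sub>R u) = r *\<^sub>R T u" for r u
    using Tl[of "qof_real r" u 0] by (simp add: Rreal T0)
  have Tdiff: "\<And>u v. T (u - v) = T u - T v" by (rule add_hom_diff) (rule Tadd)
  define Q where "Q = Qs s T"
  have QT: "\<And>w. Q (T w) = T (Q w)"
    unfolding Q_def Qs_def by (simp add: Tadd Tdiff Tsc)
  obtain B0 where B0: "qbounded_op Rm B0" "\<And>v. B0 (Q v) = v" "\<And>v. Q (B0 v) = v"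
    using assms(3) unfolding S_resolvent_set_def qinvertible_def Q_def by blast
  have Beq: "qinverse Rm Q = B0"
    unfolding qinverse_def
  proof (rule the_equality)
    show "qbounded_op Rm B0 \<and> (\<forall>v. B0 (Q v) = v) \<and> (\<forall>v. Q (B0 v) = v)" using B0 by blast
  next
    fix B assume h: "qbounded_op Rm B \<and> (\<forall>v. B (Q v) = v) \<and> (\<forall>v. Q (B v) = v)"
    show "B = B0"
    proof
      fix v
      have "B v = B (Q (B0 v))" using B0(3) by simp
      also have "\<dots> = B0 v" using h by simp
      finally show "B v = B0 v" .
    qed
  qed
  have Bl: "\<And>u v q. B0 (Rm q u + v) = Rm q (B0 u) + B0 v" using B0(1) unfolding qbounded_op_def by blast
  have Badd: "\<And>u v. B0 (u + v) = B0 u + B0 v" using Bl[of qone] Rone by simp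
  have Bdiff: "\<And>u v. B0 (u - v) = B0 u - B0 v" by (rule add_hom_diff) (rule Badd)
  have TB: "T (B0 v) = B0 (T v)" for v
  proof -
    have "T (B0 v) = B0 (Q (T (B0 v)))" by (simp add: B0(2))
    also have "\<dots> = B0 (T v)" by (simp add: QT B0(3))
    finally show ?thesis .
  qed
  have SL: "\<And>v. SL_resolvent Lm Rm s T v = B0 (Lm (qcnj s) v - T v)"
    unfolding SL_resolvent_def using Beq Q_def by simp
  have key: "SL_resolvent Lm Rm s T (Lm s w) - T (SL_resolvent Lm Rm s T w) = w" for w
  proof -
    have c1: "Lm (qcnj s) (Lm s w) = (qnorm s)\<^sup>2 *\<^sub>R w"
      using Lmul[of "qcnj s" s w] qcnj_mul Lreal by simp
    have c2: "T (Lm (qcnj s) w) + T (Lm s w) = (2 * qre s) *\<^sub>R T w"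
    proof -
      have "Lm (qcnj s) w + Lm s w = (2 * qre s) *\<^sub>R w"
        using Ladd[of "qcnj s" s w] by (simp add: qcnj_add Lreal)
      hence "T (Lm (qcnj s) w + Lm s w) = (2 * qre s) *\<^sub>R T w" by (simp add: Tsc)
      thus ?thesis by (simp add: Tadd)
    qed
    have "SL_resolvent Lm Rm s T (Lm s w) - T (SL_resolvent Lm Rm s T w)
        = B0 ((Lm (qcnj s) (Lm s w) - T (Lm s w)) - (T (Lm (qcnj s) w) - T (T w)))"
      by (simp add: SL TB Bdiff Tdiff)
    also have "(Lm (qcnj s) (Lm s w) - T (Lm s w)) - (T (Lm (qcnj s) w) - T (T w)) = Q w"
    proof -
      have "T (Lm s w) = (2 * qre s) *\<^sub>R T w - T (Lm (qcnj s) w)" using c2 by (simp add: eq_diff_eq add.commute)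
      thus ?thesis unfolding Q_def Qs_def c1 by (simp add: algebra_simps)
    qed
    also have "B0 (Q w) = w" by (rule B0(2))
    finally show ?thesis .
  qed
  show ?thesis
  proof
    fix v
    have "Yosida_L Lm Rm s T v = SL_resolvent Lm Rm s T (Lm s (Lm s v)) - Lm s v"
      unfolding Yosida_L_def by (simp add: Lmul)
    also have "\<dots> = T (SL_resolvent Lm Rm s T (Lm s v))"
      using key[of "Lm s v"] by (simp add: diff_eq_eq add.commute)
    finally show "Yosida_L Lm Rm s T v = T (SL_resolvent Lm Rm s T (Lm s v))" .
  qed
qed

end
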